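(* Let $\mathcal{S}$ be a finite set of locations forming a rectangular grid, identified with a set of integer lattice points $\mathcal{S}\subseteq\mathbb{Z}^2$ (grid cells of unit side length), and let $d_E$ denote the Euclidean distance on $\mathbb{R}^2$. Let $\mathcal{G}_1=(\mathcal{S},\mathcal{E}_1)$ be the location policy graph in which each location $\textbf{s}\in\mathcal{S}$ is joined by an edge to each of its (up to) eight closest grid locations, i.e. $\{\textbf{s},\textbf{s}'\}\in\mathcal{E}_1$ iff $\textbf{s}\neq\textbf{s}'$ and $\max(|s_x-s'_x|,|s_y-s'_y|)=1$. Let $\epsilon>0$. If a randomized algorithm $\mathcal{A}$ with input in $\mathcal{S}$ satisfies $\{\epsilon,\mathcal{G}_1\}$-location privacy, then $\mathcal{A}$ satisfies $\epsilon$-Geo-Indistinguishability, i.e. for all $\textbf{s}_i,\textbf{s}_j\in\mathcal{S}$ and every set $Z$ of outputs, $\Pr(\mathcal{A}(\textbf{s}_i)\in Z)\leq e^{\epsilon\, d_E(\textbf{s}_i,\textbf{s}_j)}\Pr(\mathcal{A}(\textbf{s}_j)\in Z)$.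
   Context: A location policy graph is an undirected graph $\mathcal{G}=(\mathcal{S},\mathcal{E})$ whose nodes $\mathcal{S}$ are the possible locations and whose edges $\mathcal{E}$ indicate pairs of locations that must be indistinguishable. Two locations joined by an edge are called 1-neighbors. A randomized algorithm $\mathcal{A}$ taking a location as input satisfies $\{\epsilon,\mathcal{G}\}$-location privacy iff for every set $Z$ of possible outputs and every pair of 1-neighbors $\textbf{s},\textbf{s}'$ in $\mathcal{G}$, $\Pr(\mathcal{A}(\textbf{s})\in Z)\leq e^{\epsilon}\Pr(\mathcal{A}(\textbf{s}')\in Z)$. An algorithm satisfies $\epsilon$-Geo-Indistinguishability iff for all locations $\textbf{s}_i,\textbf{s}_j$ and all output sets $Z$, $\Pr(\mathcal{A}(\textbf{s}_i)\in Z)\leq e^{\epsilon d_E(\textbf{s}_i,\textbf{s}_j)}\Pr(\mathcal{A}(\textbf{s}_j)\in Z)$, where $d_E$ is Euclidean distance. *)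

theory Defs
  imports "HOL-Probability.Probability"
begin

type_synonym loc = "int \<times> int"

definition grid :: "int \<Rightarrow> int \<Rightarrow> int \<Rightarrow> int \<Rightarrow> loc set" where
  "grid x0 x1 y0 y1 = {x0..x1} \<times> {y0..y1}"

definition E1 :: "loc \<Rightarrow> loc \<Rightarrow> bool" where
  "E1 s s' \<longleftrightarrow> s \<noteq> s' \<and> max \<bar>fst s - fst s'\<bar> \<bar>snd s - snd s'\<bar> = 1"

definition dE :: "loc \<Rightarrow> loc \<Rightarrow> real" where
  "dE s s' = sqrt ((real_of_int (fst s - fst s'))\<^sup>2 + (real_of_int (snd s - snd s'))\<^sup>2)"

definition randomized_alg :: "loc set \<Rightarrow> (loc \<Rightarrow> 'b measure) \<Rightarrow> bool" where
  "randomized_alg S A \<longleftrightarrow> (\<forall>s\<in>S. prob_space (A s)) \<and>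
     (\<forall>s\<in>S. \<forall>s'\<in>S. sets (A s) = sets (A s'))"

definition location_privacy ::
  "real \<Rightarrow> loc set \<Rightarrow> (loc \<Rightarrow> loc \<Rightarrow> bool) \<Rightarrow> (loc \<Rightarrow> 'b measure) \<Rightarrow> bool" where
  "location_privacy \<epsilon> S E A \<longleftrightarrow>
     (\<forall>s\<in>S. \<forall>s'\<in>S. E s s' \<longrightarrow>
        (\<forall>Z\<in>sets (A s). measure (A s) Z \<le> exp \<epsilon> * measure (A s') Z))"

definition geo_ind :: "real \<Rightarrow> loc set \<Rightarrow> (loc \<Rightarrow> 'b measure) \<Rightarrow> bool" where
  "geo_ind \<epsilon> S A \<longleftrightarrow>
     (\<forall>si\<in>S. \<forall>sj\<in>S.
        (\<forall>Z\<in>sets (A si). measure (A si) Z \<le> exp (\<epsilon> * dE si sj) * measure (A sj) Z))"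

end

theory Submission
  imports Defs
begin

lemma cheb_le_dE:
  "real_of_int (max \<bar>fst a - fst b\<bar> \<bar>snd a - snd b\<bar>) \<le> dE a b"
proof -
  have 1: "\<bar>real_of_int (fst a - fst b)\<bar> \<le> dE a b"
    unfolding dE_def by (metis real_sqrt_abs real_sqrt_le_mono le_add_same_cancel1 zero_le_power2)
  have 2: "\<bar>real_of_int (snd a - snd b)\<bar> \<le> dE a b"
    unfolding dE_def by (metis real_sqrt_abs real_sqrt_le_mono le_add_same_cancel2 zero_le_power2)
  show ?thesis using 1 2 by (simp add: max_def)
qed

lemma path_bound:
  fixes A :: "loc \<Rightarrow> 'b measure"
  assumes ra: "randomized_alg (grid x0 x1 y0 y1) A"
    and lp: "location_privacy \<epsilon> (grid x0 x1 y0 y1) E1 A"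
    and ep: "\<epsilon> > 0"
  shows "a \<in> grid x0 x1 y0 y1 \<Longrightarrow> b \<in> grid x0 x1 y0 y1 \<Longrightarrow>
     nat (max \<bar>fst a - fst b\<bar> \<bar>snd a - snd b\<bar>) = n \<Longrightarrow>
     Z \<in> sets (A a) \<Longrightarrow> measure (A a) Z \<le> exp (\<epsilon> * real n) * measure (A b) Z"
proof (induction n arbitrary: a)
  case 0
  then have "a = b" by (cases a, cases b) auto
  then show ?case by simp
next
  case (Suc n)
  obtain ax ay where a: "a = (ax, ay)" by (cases a)
  obtain bx bY where b: "b = (bx, bY)" by (cases b)
  define a' where "a' = (ax + sgn (bx - ax), ay + sgn (bY - ay))"
  have ag: "a' \<in> grid x0 x1 y0 y1" using Suc.prems(1,2) unfolding a b a'_def grid_def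
    by (auto simp: sgn_if)
  have d: "nat (max \<bar>fst a' - fst b\<bar> \<bar>snd a' - snd b\<bar>) = n"
    using Suc.prems(3) unfolding a b a'_def by (auto simp: sgn_if max_def split: if_splits)
  have e: "E1 a a'"
    using Suc.prems(3) unfolding a b a'_def E1_def by (auto simp: sgn_if max_def split: if_splits)
  have sets: "sets (A a') = sets (A a)" using ra ag Suc.prems(1) unfolding randomized_alg_def by blast
  have IH: "measure (A a') Z \<le> exp (\<epsilon> * real n) * measure (A b) Z"
    using Suc.IH[OF ag Suc.prems(2) d] Suc.prems(4) sets by simp
  have st: "measure (A a) Z \<le> exp \<epsilon> * measure (A a') Z"
    using lp Suc.prems(1,4) ag e unfolding location_privacy_def by blast
  also have "\<dots> \<le> exp \<epsilon> * (exp (\<epsilon> * real n) * measure (A b) Z)"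
    using IH by simp
  also have "\<dots> = exp (\<epsilon> * real (Suc n)) * measure (A b) Z"
    by (simp add: algebra_simps exp_add[symmetric])
  finally show ?case .
qed

theorem theorem1:
  fixes x0 x1 y0 y1 :: int and \<epsilon> :: real and A :: "loc \<Rightarrow> 'b measure"
  assumes "\<epsilon> > 0"
    and "randomized_alg (grid x0 x1 y0 y1) A"
    and "location_privacy \<epsilon> (grid x0 x1 y0 y1) E1 A"
  shows "geo_ind \<epsilon> (grid x0 x1 y0 y1) A"
  unfolding geo_ind_def
proof (intro ballI)
  fix si sj Z
  assume si: "si \<in> grid x0 x1 y0 y1" and sj: "sj \<in> grid x0 x1 y0 y1" and Z: "Z \<in> sets (A si)"
  define n where "n = nat (max \<bar>fst si - fst sj\<bar> \<bar>snd si - snd sj\<bar>)"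
  have "measure (A si) Z \<le> exp (\<epsilon> * real n) * measure (A sj) Z"
    using path_bound[OF assms(2,3,1) si sj n_def[symmetric] Z] .
  also have "\<dots> \<le> exp (\<epsilon> * dE si sj) * measure (A sj) Z"
  proof (rule mult_right_mono)
    have "real n = real_of_int (max \<bar>fst si - fst sj\<bar> \<bar>snd si - snd sj\<bar>)"
      unfolding n_def by simp
    then have "real n \<le> dE si sj" using cheb_le_dE by simp
    then show "exp (\<epsilon> * real n) \<le> exp (\<epsilon> * dE si sj)" using assms(1) by simp
  qed simp
  finally show "measure (A si) Z \<le> exp (\<epsilon> * dE si sj) * measure (A sj) Z" .
qed

end
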